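(* Let $\tau\in\mathscr C^r(\mathbb{S}^1,\mathbb{R})$ and $R>\|\tau'\|_\infty$. For all integers $n,m\ge1$, $\mathcal N(\tau,R;n+m)\le\mathcal N(\tau,R'_m;n)\cdot\mathcal N(\tau,R;m)\le\mathcal N(\tau,R;n)\cdot\mathcal N(\tau,R;m)$, where $R'_m=\|\tau'\|_\infty+\lambda^{-m}(R-\|\tau'\|_\infty)$. Consequently $\lim_{n\to\infty}\mathcal N(\tau,R;n)^{1/n}$ exists, equals $\inf_n\mathcal N(\tau,R;n)^{1/n}$, and is independent of the choice of $R>\|\tau'\|_\infty$.
   Context: Let $\mathbb{S}^1=\mathbb{R}/\mathbb{Z}$, $\mathbb{T}^2=\mathbb{S}^1\times\mathbb{S}^1$, $r\ge2$. Let $E:\mathbb{S}^1\to\mathbb{S}^1$ be a $\mathscr C^r$ expanding map of degree $\ell\ge2$ with $1<\lambda\le E'(x)\le\Lambda$ for all $x$. For $\tau\in\mathscr C^r(\mathbb{S}^1,\mathbb{R})$ let $f(x,s)=(E(x),s+\tau(x)\bmod1)$ on $\mathbb{T}^2$. For $R>0$ set $\vartheta_R=R/(\lambda-1)$ and $\mathscr K_R=\{(\xi,\eta)\in\mathbb{R}^2:|\eta|\le\vartheta_R|\xi|\}$. For $R>\|\tau'\|_\infty$ and $n\ge1$, $\mathcal N(\tau,R;n)=\sup_{z\in\mathbb{T}^2}\sup_{v}\#\{\zeta\in f^{-n}(z): v\in Df^n(\zeta)\mathscr K_R\}$, $\sup_v$ over unit vectors $v\in\mathbb{R}^2$. *)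

theory Defs
  imports "HOL-Analysis.Analysis"
begin

text \<open>Functions on the circle S^1 = R/Z are represented by their lifts to the real line.
  The torus T^2 is represented by the fundamental domain [0,1) x [0,1).\<close>

definition C_r :: "nat \<Rightarrow> (real \<Rightarrow> real) \<Rightarrow> bool" where
  "C_r r g \<longleftrightarrow>
     (\<forall>k<r. \<forall>x. ((deriv ^^ k) g has_real_derivative (deriv ^^ Suc k) g x) (at x))
     \<and> continuous_on UNIV ((deriv ^^ r) g)"

definition periodic1 :: "(real \<Rightarrow> real) \<Rightarrow> bool" where
  "periodic1 g \<longleftrightarrow> (\<forall>x. g (x + 1) = g x)"

definition expanding_lift :: "nat \<Rightarrow> (real \<Rightarrow> real) \<Rightarrow> nat \<Rightarrow> real \<Rightarrow> real \<Rightarrow> bool" where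
  "expanding_lift r E l lam Lam \<longleftrightarrow>
     C_r r E \<and> (\<forall>x. E (x + 1) = E x + real l) \<and> 1 < lam \<and>
     (\<forall>x. lam \<le> deriv E x \<and> deriv E x \<le> Lam)"

definition sup_norm_deriv :: "(real \<Rightarrow> real) \<Rightarrow> real" where
  "sup_norm_deriv g = (SUP x. \<bar>deriv g x\<bar>)"

definition Tor :: "(real \<times> real) set" where
  "Tor = {0..<1} \<times> {0..<1}"

definition fmap :: "(real \<Rightarrow> real) \<Rightarrow> (real \<Rightarrow> real) \<Rightarrow> real \<times> real \<Rightarrow> real \<times> real" where
  "fmap E \<tau> p = (frac (E (fst p)), frac (snd p + \<tau> (fst p)))"

definition Dfmap :: "(real \<Rightarrow> real) \<Rightarrow> (real \<Rightarrow> real) \<Rightarrow> real \<times> real \<Rightarrow> real \<times> real \<Rightarrow> real \<times> real" where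
  "Dfmap E \<tau> p w = (deriv E (fst p) * fst w, deriv \<tau> (fst p) * fst w + snd w)"

fun Dfn :: "(real \<Rightarrow> real) \<Rightarrow> (real \<Rightarrow> real) \<Rightarrow> nat \<Rightarrow> real \<times> real \<Rightarrow> real \<times> real \<Rightarrow> real \<times> real" where
  "Dfn E \<tau> 0 p = id"
| "Dfn E \<tau> (Suc n) p = Dfmap E \<tau> ((fmap E \<tau> ^^ n) p) \<circ> Dfn E \<tau> n p"

definition theta :: "real \<Rightarrow> real \<Rightarrow> real" where
  "theta lam R = R / (lam - 1)"

definition cone :: "real \<Rightarrow> real \<Rightarrow> (real \<times> real) set" where
  "cone lam R = {(\<xi>, \<eta>). \<bar>\<eta>\<bar> \<le> theta lam R * \<bar>\<xi>\<bar>}"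

definition Ncount :: "(real \<Rightarrow> real) \<Rightarrow> (real \<Rightarrow> real) \<Rightarrow> real \<Rightarrow> real \<Rightarrow> nat \<Rightarrow> real" where
  "Ncount E \<tau> lam R n =
     (SUP z\<in>Tor. SUP v\<in>{v :: real \<times> real. norm v = 1}.
        real (card {\<zeta>\<in>Tor. (fmap E \<tau> ^^ n) \<zeta> = z \<and> v \<in> Dfn E \<tau> n \<zeta> ` cone lam R}))"

end

theory Submission
  imports Defs
begin


lemma int_diff_small:
  fixes a b :: real
  assumes "a - b = of_int j" "\<bar>a - b\<bar> < 1"
  shows "a = b"
proof -
  have "\<bar>of_int j :: real\<bar> < 1" using assms by simp
  hence "j = 0" by linarith
  thus ?thesis using assms by simp
qed

locale setting =
  fixes E \<tau> :: "real \<Rightarrow> real" and l :: nat and lam S :: real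
  assumes E_der: "\<And>x. (E has_real_derivative deriv E x) (at x)"
    and E_per: "\<And>x. E (x + 1) = E x + real l"
    and l_ge: "l \<ge> 1"
    and lam_gt: "1 < lam"
    and E'_ge: "\<And>x. lam \<le> deriv E x"
    and tau'_le: "\<And>x. \<bar>deriv \<tau> x\<bar> \<le> S"
begin

abbreviation "f \<equiv> fmap E \<tau>"

lemma S_nonneg: "0 \<le> S" using tau'_le[of 0] by linarith

lemma E_mono: assumes "x < y" shows "E x < E y"
proof (rule DERIV_pos_imp_increasing[where f=E, OF assms])
  fix t show "\<exists>d. (E has_real_derivative d) (at t) \<and> 0 < d"
    using E_der[of t] E'_ge[of t] lam_gt by (intro exI[of _ "deriv E t"]) auto
qed

lemma E_inj: "E x = E y \<Longrightarrow> x = y"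
  by (metis E_mono less_irrefl linorder_neqE)

lemma f_Tor: "f p \<in> Tor"
  by (simp add: fmap_def Tor_def frac_lt_1)

lemma fn_Tor: "p \<in> Tor \<Longrightarrow> (f ^^ n) p \<in> Tor"
  by (cases n) (auto simp: f_Tor)

lemma E_range: assumes "0 \<le> x" "x < 1" shows "E 0 \<le> E x" "E x < E 0 + real l"
proof -
  show "E 0 \<le> E x" using E_mono[of 0 x] assms by (cases "x = 0") auto
  show "E x < E 0 + real l" using E_mono[of x 1] assms E_per[of 0] by simp
qed

definition P1 where "P1 z = {\<zeta>\<in>Tor. f \<zeta> = z}"

lemma P1_bound: "finite (P1 z) \<and> card (P1 z) \<le> l"
proof -
  define h where "h \<zeta> = nat \<lfloor>E (fst \<zeta>) - E 0\<rfloor>" for \<zeta> :: "real \<times> real"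
  have img: "h ` P1 z \<subseteq> {..<l}"
  proof
    fix w assume "w \<in> h ` P1 z"
    then obtain x s where xs: "(x,s) \<in> Tor" "w = h (x,s)" unfolding P1_def by auto
    hence "0 \<le> x" "x < 1" by (auto simp: Tor_def)
    from E_range[OF this] have "0 \<le> E x - E 0" "E x - E 0 < real l" by auto
    hence "\<lfloor>E x - E 0\<rfloor> < int l" by linarith
    thus "w \<in> {..<l}" using xs(2) \<open>0 \<le> E x - E 0\<close> by (simp add: h_def nat_less_iff)
  qed
  have inj: "inj_on h (P1 z)"
  proof (rule inj_onI)
    fix p q assume p: "p \<in> P1 z" and q: "q \<in> P1 z" and hpq: "h p = h q"
    obtain x s where [simp]: "p = (x,s)" by (cases p)
    obtain y t where [simp]: "q = (y,t)" by (cases q)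
    have x: "0 \<le> x" "x < 1" "0 \<le> s" "s < 1" using p by (auto simp: P1_def Tor_def)
    have y: "0 \<le> y" "y < 1" "0 \<le> t" "t < 1" using q by (auto simp: P1_def Tor_def)
    have fe: "frac (E x) = frac (E y)" "frac (s + \<tau> x) = frac (t + \<tau> y)"
      using p q by (auto simp: P1_def fmap_def)
    have "0 \<le> E x - E 0" "0 \<le> E y - E 0" using E_range x y by auto
    hence "0 \<le> \<lfloor>E x - E 0\<rfloor>" "0 \<le> \<lfloor>E y - E 0\<rfloor>" by simp_all
    hence "\<lfloor>E x - E 0\<rfloor> = \<lfloor>E y - E 0\<rfloor>" using hpq by (simp add: h_def eq_nat_nat_iff)
    hence "\<bar>E x - E y\<bar> < 1" by linarith
    moreover obtain j where "E x = E y + of_int j" using fe(1) frac_eqE by blast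
    ultimately have "E x = E y" using int_diff_small[of "E x" "E y" j] by simp
    hence xy: "x = y" by (rule E_inj)
    obtain k where "s + \<tau> x = t + \<tau> y + of_int k" using fe(2) frac_eqE by blast
    hence "s = t" using int_diff_small[of s t k] x y xy by simp
    thus "p = q" using xy by simp
  qed
  have "finite (P1 z)" using inj img finite_subset[OF img] by (meson finite_imageD finite_lessThan)
  moreover have "card (P1 z) \<le> l" using card_inj_on_le[OF inj img] by simp
  ultimately show ?thesis by simp
qed

lemma f_surj: assumes "z \<in> Tor" shows "\<exists>\<zeta>\<in>Tor. f \<zeta> = z"
proof -
  obtain a b where z: "z = (a,b)" by (cases z)
  have ab: "0 \<le> a" "a < 1" "0 \<le> b" "b < 1" using assms z by (auto simp: Tor_def)
  define t where "t = a + of_int \<lceil>E 0 - a\<rceil>"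
  have t1: "E 0 \<le> t" "t < E 0 + 1" unfolding t_def by linarith+
  have E1: "E 1 = E 0 + real l" using E_per[of 0] by simp
  have cont: "continuous_on {0..1} E"
    by (meson DERIV_isCont E_der continuous_at_imp_continuous_on)
  obtain x where x: "0 \<le> x" "x \<le> 1" "E x = t"
    using IVT'[of E 0 t 1, OF t1(1) _ _ cont] t1 E1 l_ge by auto
  have "x \<noteq> 1" using x E1 t1 l_ge by auto
  hence x1: "x < 1" using x by simp
  define s where "s = frac (b - \<tau> x)"
  have "frac (E x) = a" using x(3) ab unfolding t_def by simp
  moreover have "frac (s + \<tau> x) = b"
  proof -
    have "s + \<tau> x = b + of_int (- \<lfloor>b - \<tau> x\<rfloor>)" by (simp add: s_def frac_def)
    hence "frac (s + \<tau> x) = frac (b + of_int (- \<lfloor>b - \<tau> x\<rfloor>))" by (rule arg_cong)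
    also have "\<dots> = frac b" by (rule frac_add_of_int_right)
    finally have "frac (s + \<tau> x) = frac b" .
    thus ?thesis using ab by simp
  qed
  ultimately show ?thesis using x x1 by (intro bexI[of _ "(x,s)"]) (auto simp: z fmap_def Tor_def s_def frac_lt_1)
qed

end


context setting begin

definition Pn where "Pn n z = {\<zeta>\<in>Tor. (f ^^ n) \<zeta> = z}"

lemma Pn_bound: "finite (Pn n z) \<and> card (Pn n z) \<le> l ^ n"
proof (induction n arbitrary: z)
  case 0
  have "Pn 0 z \<subseteq> {z}" by (auto simp: Pn_def)
  hence "card (Pn 0 z) \<le> card {z}" by (intro card_mono) auto
  thus ?case using \<open>Pn 0 z \<subseteq> {z}\<close> finite_subset by auto
next
  case (Suc n)
  have eq: "Pn (Suc n) z = (\<Union>w\<in>P1 z. Pn n w)"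
    by (auto simp: Pn_def P1_def fn_Tor)
  have fin: "finite (P1 z)" "card (P1 z) \<le> l" using P1_bound by auto
  have "card (Pn (Suc n) z) \<le> (\<Sum>w\<in>P1 z. card (Pn n w))"
    unfolding eq by (rule card_UN_le[OF fin(1)])
  also have "\<dots> \<le> (\<Sum>w\<in>P1 z. l ^ n)" by (rule sum_mono) (use Suc in auto)
  also have "\<dots> = card (P1 z) * l ^ n" by simp
  also have "\<dots> \<le> l * l ^ n" using fin(2) by simp
  finally show ?case using fin(1) Suc by (simp add: eq)
qed

lemma Dfmap_scale: "Dfmap E \<tau> q (c *\<^sub>R w) = c *\<^sub>R Dfmap E \<tau> q w"
  by (cases w) (simp add: Dfmap_def algebra_simps)

lemma Dfn_scale: "Dfn E \<tau> n p (c *\<^sub>R w) = c *\<^sub>R Dfn E \<tau> n p w"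
  by (induction n arbitrary: w) (simp_all add: Dfmap_scale)

lemma Dfn_zero: "Dfn E \<tau> n p 0 = 0"
  using Dfn_scale[of n p 0 0] by simp

lemma Dfmap_inj: "inj (Dfmap E \<tau> q)"
proof (rule injI)
  fix w1 w2 assume h: "Dfmap E \<tau> q w1 = Dfmap E \<tau> q w2"
  have ne: "deriv E (fst q) \<noteq> 0" using E'_ge[of "fst q"] lam_gt by auto
  obtain a b where [simp]: "w1 = (a,b)" by (cases w1)
  obtain c d where [simp]: "w2 = (c,d)" by (cases w2)
  from h have "deriv E (fst q) * a = deriv E (fst q) * c" by (simp add: Dfmap_def)
  hence "a = c" using ne by simp
  with h show "w1 = w2" by (simp add: Dfmap_def)
qed

lemma Dfn_inj: "inj (Dfn E \<tau> n p)"
proof (induction n)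
  case 0 show ?case by simp
next
  case (Suc n) show ?case unfolding Dfn.simps by (rule inj_compose[OF Dfmap_inj Suc])
qed

lemma Dfn_add: "Dfn E \<tau> (n + m) p = Dfn E \<tau> n ((f ^^ m) p) \<circ> Dfn E \<tau> m p"
  by (induction n) (simp_all add: funpow_add)

lemma cone_scale: "w \<in> cone lam \<rho> \<Longrightarrow> c *\<^sub>R w \<in> cone lam \<rho>"
proof -
  assume w: "w \<in> cone lam \<rho>"
  obtain a b where [simp]: "w = (a,b)" by (cases w)
  have "\<bar>b\<bar> \<le> theta lam \<rho> * \<bar>a\<bar>" using w by (simp add: cone_def)
  hence "\<bar>c\<bar> * \<bar>b\<bar> \<le> \<bar>c\<bar> * (theta lam \<rho> * \<bar>a\<bar>)" by (rule mult_left_mono) simp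
  thus ?thesis by (simp add: cone_def abs_mult algebra_simps)
qed

lemma cone_mono: "\<rho>1 \<le> \<rho>2 \<Longrightarrow> cone lam \<rho>1 \<subseteq> cone lam \<rho>2"
proof
  fix w assume r: "\<rho>1 \<le> \<rho>2" and w: "w \<in> cone lam \<rho>1"
  obtain a b where [simp]: "w = (a,b)" by (cases w)
  have "theta lam \<rho>1 \<le> theta lam \<rho>2" using r lam_gt unfolding theta_def
    by (simp add: divide_right_mono)
  hence "theta lam \<rho>1 * \<bar>a\<bar> \<le> theta lam \<rho>2 * \<bar>a\<bar>" by (rule mult_right_mono) simp
  thus "w \<in> cone lam \<rho>2" using w by (simp add: cone_def)
qed

lemma cone_step:
  assumes "S \<le> \<rho>" "w \<in> cone lam \<rho>"
  shows "Dfmap E \<tau> q w \<in> cone lam (S + (\<rho> - S) / lam)"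
proof -
  obtain x y where [simp]: "w = (x,y)" by (cases w)
  define a where "a = deriv E (fst q)"
  define b where "b = deriv \<tau> (fst q)"
  define \<theta> where "\<theta> = theta lam \<rho>"
  define \<theta>' where "\<theta>' = theta lam (S + (\<rho> - S) / lam)"
  have y: "\<bar>y\<bar> \<le> \<theta> * \<bar>x\<bar>" using assms(2) by (simp add: cone_def \<theta>_def)
  have a: "lam \<le> a" using E'_ge by (simp add: a_def)
  have b: "\<bar>b\<bar> \<le> S" using tau'_le by (simp add: b_def)
  have l1: "lam - 1 > 0" using lam_gt by simp
  have key: "\<theta>' * lam = S + \<theta>"
    unfolding \<theta>'_def \<theta>_def theta_def using l1 lam_gt by (simp add: field_simps)
  have th'0: "0 \<le> \<theta>'" unfolding \<theta>'_def theta_def using assms(1) S_nonneg l1 lam_gt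
    by (intro divide_nonneg_pos) (auto intro: add_nonneg_nonneg divide_nonneg_pos)
  have "\<bar>b * x + y\<bar> \<le> \<bar>b\<bar> * \<bar>x\<bar> + \<bar>y\<bar>" by (metis abs_mult abs_triangle_ineq)
  also have "\<dots> \<le> S * \<bar>x\<bar> + \<theta> * \<bar>x\<bar>" using b y by (intro add_mono mult_right_mono) auto
  also have "\<dots> = \<theta>' * lam * \<bar>x\<bar>" by (simp add: key algebra_simps)
  also have "\<dots> \<le> \<theta>' * a * \<bar>x\<bar>" using a th'0 by (intro mult_right_mono mult_left_mono) auto
  also have "\<dots> = \<theta>' * \<bar>a * x\<bar>" using a lam_gt by (simp add: abs_mult)
  finally show ?thesis by (simp add: cone_def Dfmap_def a_def b_def \<theta>'_def)
qed

lemma cone_iter: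
  assumes "S \<le> R"
  shows "Dfn E \<tau> m p ` cone lam R \<subseteq> cone lam (S + (R - S) / lam ^ m)"
proof (induction m)
  case 0 thus ?case by simp
next
  case (Suc m)
  have ge: "S \<le> S + (R - S) / lam ^ m" using assms lam_gt by simp
  have eq: "S + (S + (R - S) / lam ^ m - S) / lam = S + (R - S) / lam ^ Suc m"
    by (simp add: field_simps)
  show ?case
  proof
    fix u assume "u \<in> Dfn E \<tau> (Suc m) p ` cone lam R"
    then obtain w where w: "w \<in> cone lam R" "u = Dfmap E \<tau> ((f ^^ m) p) (Dfn E \<tau> m p w)" by auto
    have "Dfn E \<tau> m p w \<in> cone lam (S + (R - S) / lam ^ m)" using Suc w by auto
    from cone_step[OF ge this] show "u \<in> cone lam (S + (R - S) / lam ^ Suc m)"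
      using w eq by metis
  qed
qed

end


context setting begin

definition cnt where
  "cnt \<rho> n z v = card {\<zeta>\<in>Tor. (f ^^ n) \<zeta> = z \<and> v \<in> Dfn E \<tau> n \<zeta> ` cone lam \<rho>}"

definition U :: "(real \<times> real) set" where "U = {v. norm v = 1}"

lemma Ncount_eq: "Ncount E \<tau> lam \<rho> n = (SUP z\<in>Tor. SUP v\<in>U. real (cnt \<rho> n z v))"
  unfolding Ncount_def cnt_def U_def ..

lemma cnt_sub: "{\<zeta>\<in>Tor. (f ^^ n) \<zeta> = z \<and> v \<in> Dfn E \<tau> n \<zeta> ` cone lam \<rho>} \<subseteq> Pn n z"
  by (auto simp: Pn_def)

lemma cnt_fin: "finite {\<zeta>\<in>Tor. (f ^^ n) \<zeta> = z \<and> v \<in> Dfn E \<tau> n \<zeta> ` cone lam \<rho>}"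
  by (rule finite_subset[OF cnt_sub]) (use Pn_bound in simp)

lemma cnt_le: "cnt \<rho> n z v \<le> l ^ n"
proof -
  have "cnt \<rho> n z v \<le> card (Pn n z)" unfolding cnt_def using Pn_bound[of n z] by (intro card_mono cnt_sub) auto
  thus ?thesis using Pn_bound[of n z] by linarith
qed

lemma U_ne: "U \<noteq> {}"
proof -
  have "((1::real),(0::real)) \<in> U" by (simp add: U_def)
  thus ?thesis by auto
qed
lemma Tor_ne: "(0,0) \<in> Tor" by (simp add: Tor_def)

lemma cnt_le_real: "real (cnt \<rho> n z v) \<le> real l ^ n"
proof -
  have "real (cnt \<rho> n z v) \<le> real (l ^ n)" using cnt_le by (simp only: of_nat_le_iff)
  thus ?thesis by simp
qed

lemma inner_le: "(SUP v\<in>U. real (cnt \<rho> n z v)) \<le> real l ^ n"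
  by (rule cSUP_least[OF U_ne]) (rule cnt_le_real)

lemma inner_bdd: "bdd_above ((\<lambda>v. real (cnt \<rho> n z v)) ` U)"
  by (rule bdd_aboveI2[where M="real l ^ n"]) (rule cnt_le_real)

lemma outer_bdd: "bdd_above ((\<lambda>z. SUP v\<in>U. real (cnt \<rho> n z v)) ` Tor)"
  by (rule bdd_aboveI2[where M="real l ^ n"]) (rule inner_le)

lemma Ncount_ge: "z \<in> Tor \<Longrightarrow> norm v = 1 \<Longrightarrow> real (cnt \<rho> n z v) \<le> Ncount E \<tau> lam \<rho> n"
  unfolding Ncount_eq
  by (rule order_trans[OF cSUP_upper[OF _ inner_bdd] cSUP_upper[OF _ outer_bdd]]) (auto simp: U_def)

lemma Ncount_le: "Ncount E \<tau> lam \<rho> n \<le> real l ^ n"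
  unfolding Ncount_eq by (rule cSUP_least) (use Tor_ne inner_le in auto)

lemma Ncount_lub:
  assumes "\<And>z v. z \<in> Tor \<Longrightarrow> norm v = 1 \<Longrightarrow> real (cnt \<rho> n z v) \<le> B"
  shows "Ncount E \<tau> lam \<rho> n \<le> B"
  unfolding Ncount_eq
proof (rule cSUP_least)
  show "Tor \<noteq> {}" using Tor_ne by auto
  fix z assume z: "z \<in> Tor"
  show "(SUP v\<in>U. real (cnt \<rho> n z v)) \<le> B"
    by (rule cSUP_least[OF U_ne]) (use assms z in \<open>simp add: U_def\<close>)
qed

lemma fn_surj: "z \<in> Tor \<Longrightarrow> \<exists>\<zeta>\<in>Tor. (f ^^ n) \<zeta> = z"
proof (induction n arbitrary: z)
  case 0 thus ?case by auto
next
  case (Suc n)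
  obtain w where w: "w \<in> Tor" "f w = z" using f_surj Suc by blast
  obtain \<zeta> where "\<zeta> \<in> Tor" "(f ^^ n) \<zeta> = w" using Suc.IH w by blast
  thus ?case using w by auto
qed

lemma Ncount_ge1: assumes "0 \<le> \<rho>" shows "1 \<le> Ncount E \<tau> lam \<rho> n"
proof -
  obtain \<zeta> where z: "\<zeta> \<in> Tor" "(f ^^ n) \<zeta> = (0,0)" using fn_surj Tor_ne by blast
  define y where "y = Dfn E \<tau> n \<zeta> (1,0)"
  have "y \<noteq> 0" using Dfn_inj[of n \<zeta>] Dfn_zero[of n \<zeta>] unfolding y_def
    by (metis injD zero_neq_one prod.inject zero_prod_def)
  hence nv: "norm (sgn y) = 1" by (simp add: norm_sgn)
  have c: "(1,0) \<in> cone lam \<rho>" using assms lam_gt by (simp add: cone_def theta_def)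
  have "sgn y = Dfn E \<tau> n \<zeta> (inverse (norm y) *\<^sub>R (1,0))"
    by (simp only: Dfn_scale y_def sgn_div_norm divide_inverse_commute scaleR_conv_of_real)
  hence "sgn y \<in> Dfn E \<tau> n \<zeta> ` cone lam \<rho>" using cone_scale[OF c] by blast
  hence "\<zeta> \<in> {\<zeta>\<in>Tor. (f ^^ n) \<zeta> = (0,0) \<and> sgn y \<in> Dfn E \<tau> n \<zeta> ` cone lam \<rho>}" using z by auto
  hence "0 < cnt \<rho> n (0,0) (sgn y)" unfolding cnt_def using cnt_fin
    by (subst card_gt_0_iff) blast
  hence "1 \<le> cnt \<rho> n (0,0) (sgn y)" by simp
  hence "1 \<le> real (cnt \<rho> n (0,0) (sgn y))" by simp
  also have "\<dots> \<le> Ncount E \<tau> lam \<rho> n" by (rule Ncount_ge[OF Tor_ne nv])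
  finally show ?thesis .
qed

lemma Ncount_mono: assumes "\<rho>1 \<le> \<rho>2" shows "Ncount E \<tau> lam \<rho>1 n \<le> Ncount E \<tau> lam \<rho>2 n"
proof (rule Ncount_lub)
  fix z and v :: "real \<times> real" assume "z \<in> Tor" "norm v = 1"
  have "cnt \<rho>1 n z v \<le> cnt \<rho>2 n z v" unfolding cnt_def
    by (rule card_mono[OF cnt_fin]) (use cone_mono[OF assms] in blast)
  hence "real (cnt \<rho>1 n z v) \<le> real (cnt \<rho>2 n z v)" by simp
  also have "\<dots> \<le> Ncount E \<tau> lam \<rho>2 n" by (rule Ncount_ge) fact+
  finally show "real (cnt \<rho>1 n z v) \<le> Ncount E \<tau> lam \<rho>2 n" .
qed

end


context setting begin

lemma key_cnt:
  assumes SR: "S \<le> R" and z: "z \<in> Tor" and v: "norm v = 1"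
  shows "real (cnt R (n + m) z v) \<le> real (cnt (S + (R - S) / lam ^ m) n z v) * Ncount E \<tau> lam R m"
proof -
  define R' where "R' = S + (R - S) / lam ^ m"
  define A where "A = {\<zeta>\<in>Tor. (f ^^ (n + m)) \<zeta> = z \<and> v \<in> Dfn E \<tau> (n + m) \<zeta> ` cone lam R}"
  define B where "B = {\<zeta>\<in>Tor. (f ^^ n) \<zeta> = z \<and> v \<in> Dfn E \<tau> n \<zeta> ` cone lam R'}"
  define g where "g = f ^^ m"
  define N where "N = Ncount E \<tau> lam R m"
  have finA: "finite A" unfolding A_def by (rule cnt_fin)
  have finB: "finite B" unfolding B_def by (rule cnt_fin)
  have N0: "0 \<le> N" unfolding N_def using Ncount_ge[OF Tor_ne, of "(1,0)" R m] by simp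
  have img: "g ` A \<subseteq> B"
  proof
    fix w assume "w \<in> g ` A"
    then obtain \<zeta> c where \<zeta>: "\<zeta> \<in> Tor" "(f ^^ (n + m)) \<zeta> = z" "c \<in> cone lam R"
       "v = Dfn E \<tau> (n + m) \<zeta> c" "w = g \<zeta>" unfolding A_def by auto
    have "w \<in> Tor" using \<zeta> fn_Tor g_def by simp
    moreover have "(f ^^ n) w = z" using \<zeta> by (simp add: g_def funpow_add)
    moreover have "Dfn E \<tau> m \<zeta> c \<in> cone lam R'" using cone_iter[OF SR, of m \<zeta>] \<zeta>(3) R'_def by auto
    moreover have "v = Dfn E \<tau> n w (Dfn E \<tau> m \<zeta> c)" using \<zeta> by (simp add: Dfn_add g_def)
    ultimately show "w \<in> B" unfolding B_def by auto
  qed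
  have fib: "card {\<zeta>\<in>A. g \<zeta> = w} \<le> N" if w: "w \<in> g ` A" for w
  proof -
    obtain \<zeta>0 c0 where z0: "\<zeta>0 \<in> Tor" "c0 \<in> cone lam R" "v = Dfn E \<tau> (n + m) \<zeta>0 c0" "w = g \<zeta>0"
      using w unfolding A_def by auto
    define y where "y = Dfn E \<tau> m \<zeta>0 c0"
    have vy: "v = Dfn E \<tau> n w y" using z0 by (simp add: Dfn_add g_def y_def)
    have "y \<noteq> 0" using vy v Dfn_zero[of n w] by auto
    hence nv: "norm (sgn y) = 1" by (simp add: norm_sgn)
    have wT: "w \<in> Tor" using z0 fn_Tor g_def by simp
    have sub: "{\<zeta>\<in>A. g \<zeta> = w} \<subseteq> {\<zeta>\<in>Tor. (f ^^ m) \<zeta> = w \<and> sgn y \<in> Dfn E \<tau> m \<zeta> ` cone lam R}"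
    proof
      fix \<zeta> assume "\<zeta> \<in> {\<zeta>\<in>A. g \<zeta> = w}"
      then obtain c where c: "\<zeta> \<in> Tor" "c \<in> cone lam R" "v = Dfn E \<tau> (n + m) \<zeta> c" "g \<zeta> = w"
        unfolding A_def by auto
      have "Dfn E \<tau> n w (Dfn E \<tau> m \<zeta> c) = Dfn E \<tau> n w y" using c vy by (simp add: Dfn_add g_def)
      hence yc: "Dfn E \<tau> m \<zeta> c = y" using Dfn_inj[of n w] by (simp add: inj_eq)
      have "sgn y = Dfn E \<tau> m \<zeta> (inverse (norm y) *\<^sub>R c)"
        by (simp add: Dfn_scale yc sgn_div_norm divide_inverse_commute)
      moreover have "inverse (norm y) *\<^sub>R c \<in> cone lam R" using cone_scale c by blast
      ultimately show "\<zeta> \<in> {\<zeta>\<in>Tor. (f ^^ m) \<zeta> = w \<and> sgn y \<in> Dfn E \<tau> m \<zeta> ` cone lam R}"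
        using c g_def by auto
    qed
    have "card {\<zeta>\<in>A. g \<zeta> = w} \<le> cnt R m w (sgn y)" unfolding cnt_def
      by (rule card_mono[OF cnt_fin sub])
    hence "real (card {\<zeta>\<in>A. g \<zeta> = w}) \<le> real (cnt R m w (sgn y))" by simp
    also have "\<dots> \<le> N" unfolding N_def by (rule Ncount_ge[OF wT nv])
    finally show ?thesis .
  qed
  have Aeq: "A = (\<Union>w\<in>g ` A. {\<zeta>\<in>A. g \<zeta> = w})" by auto
  have "card A \<le> (\<Sum>w\<in>g ` A. card {\<zeta>\<in>A. g \<zeta> = w})"
    by (subst Aeq) (rule card_UN_le[OF finite_imageI[OF finA]])
  hence "real (card A) \<le> real (\<Sum>w\<in>g ` A. card {\<zeta>\<in>A. g \<zeta> = w})"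
    by (simp only: of_nat_le_iff)
  also have "\<dots> = (\<Sum>w\<in>g ` A. real (card {\<zeta>\<in>A. g \<zeta> = w}))" by (rule of_nat_sum)
  also have "\<dots> \<le> (\<Sum>w\<in>g ` A. N)" by (rule sum_mono) (rule fib)
  also have "\<dots> = real (card (g ` A)) * N" by simp
  also have "\<dots> \<le> real (card B) * N" using card_mono[OF finB img] N0 by (intro mult_right_mono) auto
  finally show ?thesis unfolding cnt_def A_def B_def R'_def N_def .
qed

lemma key_N:
  assumes SR: "S \<le> R"
  shows "Ncount E \<tau> lam R (n + m) \<le> Ncount E \<tau> lam (S + (R - S) / lam ^ m) n * Ncount E \<tau> lam R m"
proof (rule Ncount_lub)
  fix z and v :: "real \<times> real" assume z: "z \<in> Tor" and v: "norm v = 1"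
  have N0: "0 \<le> Ncount E \<tau> lam R m" using Ncount_ge[OF Tor_ne, of "(1,0)" R m] by simp
  have "real (cnt R (n + m) z v) \<le> real (cnt (S + (R - S) / lam ^ m) n z v) * Ncount E \<tau> lam R m"
    by (rule key_cnt[OF SR z v])
  also have "\<dots> \<le> Ncount E \<tau> lam (S + (R - S) / lam ^ m) n * Ncount E \<tau> lam R m"
    by (rule mult_right_mono[OF Ncount_ge[OF z v] N0])
  finally show "real (cnt R (n + m) z v) \<le> \<dots>" .
qed

end


lemma exp_over_n_lim: "(\<lambda>n. D * exp (M / real n)) \<longlonglongrightarrow> (D::real)"
proof -
  have "(\<lambda>n. M / real n) \<longlonglongrightarrow> 0" by (rule lim_const_over_n)
  hence "(\<lambda>n. exp (M / real n)) \<longlonglongrightarrow> exp 0" by (rule tendsto_exp)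
  hence "(\<lambda>n. D * exp (M / real n)) \<longlonglongrightarrow> D * exp 0" by (rule tendsto_mult_left)
  thus ?thesis by simp
qed

lemma ln_bound:
  fixes a :: "nat \<Rightarrow> real"
  assumes sub: "\<And>n m. 1 \<le> n \<Longrightarrow> 1 \<le> m \<Longrightarrow> a (n + m) \<le> a n * a m"
    and pos: "\<And>n. 1 \<le> a n" and up: "\<And>n. a n \<le> Lb ^ n"
    and k: "1 \<le> k"
  shows "1 \<le> n \<Longrightarrow> ln (a n) \<le> real (n div k) * ln (a k) + real k * ln Lb"
proof (induction n rule: less_induct)
  case (less n)
  have Lb: "1 \<le> Lb" using pos[of 1] up[of 1] by simp
  have lnLb: "0 \<le> ln Lb" using Lb by simp
  have lnak: "0 \<le> ln (a k)" using pos[of k] by simp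
  have lnup: "ln (a j) \<le> real j * ln Lb" for j
  proof -
    have "ln (a j) \<le> ln (Lb ^ j)" using pos[of j] up[of j] by (subst ln_le_cancel_iff) auto
    thus ?thesis using Lb by (simp add: ln_realpow)
  qed
  consider "n < k" | "n = k" | "k < n" by linarith
  thus ?case
  proof cases
    case 1
    hence "n div k = 0" by simp
    moreover have "real n * ln Lb \<le> real k * ln Lb" using 1 lnLb by (intro mult_right_mono) auto
    ultimately show ?thesis using lnup[of n] by simp
  next
    case 2 thus ?thesis using lnLb k by simp
  next
    case 3
    have IH: "ln (a (n - k)) \<le> real ((n - k) div k) * ln (a k) + real k * ln Lb"
      using less.IH[of "n - k"] 3 k by simp
    have "a n = a ((n - k) + k)" using 3 by simp
    also have "\<dots> \<le> a (n - k) * a k" using sub[of "n - k" k] 3 k by simp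
    finally have "ln (a n) \<le> ln (a (n - k) * a k)"
      using pos[of n] by (subst ln_le_cancel_iff) (auto intro: order.trans[OF _ pos[of n]])
    also have "\<dots> = ln (a (n - k)) + ln (a k)" using pos[of "n-k"] pos[of k] by (simp add: ln_mult)
    also have "n div k = Suc ((n - k) div k)" using 3 k by (simp add: le_div_geq)
    ultimately show ?thesis using IH by (simp add: algebra_simps)
  qed
qed

lemma ln_ratio_bound:
  fixes a :: "nat \<Rightarrow> real"
  assumes "1 \<le> a k" "real (n div k) \<le> real n / real k" "0 < n" "0 < k"
    and h: "ln x \<le> real (n div k) * ln (a k) + C"
  shows "ln x / real n \<le> ln (a k) / real k + C / real n"
proof -
  have "real (n div k) * ln (a k) \<le> (real n / real k) * ln (a k)"
    using assms by (intro mult_right_mono) auto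
  hence "ln x \<le> real n * (ln (a k) / real k) + C" using h by (simp add: field_simps)
  hence "ln x / real n \<le> (real n * (ln (a k) / real k) + C) / real n"
    using assms by (simp add: divide_right_mono)
  thus ?thesis using assms by (simp add: add_divide_distrib)
qed

lemma powr_exp_ln: "0 < x \<Longrightarrow> x powr (1 / real n) = exp (ln x / real n)"
  by (simp add: powr_def)

lemma inf_le_of_bound:
  fixes c :: "nat \<Rightarrow> real"
  assumes low: "\<And>n. 1 \<le> n \<Longrightarrow> L \<le> c n"
    and up: "\<And>n. N0 \<le> n \<Longrightarrow> c n \<le> D * exp (M / real n)"
  shows "L \<le> D"
proof (rule ccontr)
  assume "\<not> L \<le> D"
  hence "D < L" by simp
  from order_tendstoD(2)[OF exp_over_n_lim this, of M]
  obtain N where N: "\<And>n. N \<le> n \<Longrightarrow> D * exp (M / real n) < L"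
    unfolding eventually_sequentially by blast
  define n where "n = max N (max N0 1)"
  have "L \<le> c n" using low n_def by simp
  also have "\<dots> \<le> D * exp (M / real n)" using up n_def by simp
  also have "\<dots> < L" using N n_def by simp
  finally show False by simp
qed

lemma lim_of_bound:
  fixes c :: "nat \<Rightarrow> real"
  assumes nn: "\<And>n. 0 \<le> c n"
    and up: "\<And>k. 1 \<le> k \<Longrightarrow> \<exists>M. \<forall>n\<ge>1. c n \<le> c k * exp (M / real n)"
  shows "(\<lambda>n. c (Suc n)) \<longlonglongrightarrow> (INF n\<in>{1..}. c n)"
proof -
  define L where "L = (INF n\<in>{1..}. c n)"
  have bdd: "bdd_below (c ` {1..})" by (rule bdd_belowI2[where m=0]) (rule nn)
  have low: "L \<le> c n" if "1 \<le> n" for n unfolding L_def by (rule cINF_lower[OF bdd]) (use that in auto)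
  show ?thesis unfolding L_def[symmetric]
  proof (rule LIMSEQ_I)
    fix r :: real assume r: "0 < r"
    have "L < L + r / 2" using r by simp
    hence "\<exists>k\<in>{1..}. c k < L + r / 2" unfolding L_def using cINF_less_iff[OF _ bdd] by blast
    then obtain k where k: "1 \<le> k" "c k < L + r / 2" by auto
    obtain M where M: "\<And>n. 1 \<le> n \<Longrightarrow> c n \<le> c k * exp (M / real n)" using up[OF k(1)] by blast
    have "c k < c k + r / 2" using r by simp
    from order_tendstoD(2)[OF exp_over_n_lim this, of M]
    obtain N where N: "\<And>n. N \<le> n \<Longrightarrow> c k * exp (M / real n) < c k + r / 2"
      unfolding eventually_sequentially by blast
    show "\<exists>no. \<forall>n\<ge>no. norm (c (Suc n) - L) < r"
    proof (intro exI allI impI)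
      fix n assume n: "N \<le> n"
      have "L \<le> c (Suc n)" by (rule low) simp
      moreover have "c (Suc n) < L + r"
        using M[of "Suc n"] N[of "Suc n"] n k(2) by simp
      ultimately show "norm (c (Suc n) - L) < r" by simp
    qed
  qed
qed



context setting begin

abbreviation "NN \<rho> n \<equiv> Ncount E \<tau> lam \<rho> n"

lemma NN_pos: "0 \<le> \<rho> \<Longrightarrow> 0 < NN \<rho> n" using Ncount_ge1[of \<rho> n] by simp

lemma subm: assumes "S \<le> R" shows "NN R (n + m) \<le> NN R n * NN R m"
proof -
  have "S + (R - S) / lam ^ m \<le> R"
  proof -
    have "1 \<le> lam ^ m" using lam_gt by simp
    hence "(R - S) / lam ^ m \<le> R - S" using assms by (simp add: divide_le_eq mult_le_cancel_left1)
    thus ?thesis by simp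
  qed
  hence "NN (S + (R - S) / lam ^ m) n \<le> NN R n" by (rule Ncount_mono)
  hence "NN (S + (R - S) / lam ^ m) n * NN R m \<le> NN R n * NN R m"
    using NN_pos[of R m] assms S_nonneg by (intro mult_right_mono) auto
  with key_N[OF assms, of n m] show ?thesis by linarith
qed

lemma c_bound:
  assumes a: "\<And>n. 0 < a n" and b: "1 \<le> b k" and k: "1 \<le> k"
    and h: "\<And>n. Nz \<le> n \<Longrightarrow> ln (a n) \<le> real (n div k) * ln (b k) + C"
  shows "\<forall>n\<ge>max Nz 1. a n powr (1 / real n) \<le> b k powr (1 / real k) * exp (C / real n)"
proof (intro allI impI)
  fix n assume n: "max Nz 1 \<le> n"
  have "ln (a n) / real n \<le> ln (b k) / real k + C / real n"
    by (rule ln_ratio_bound[where a=b]) (use b k n h[of n] of_nat_div_le_of_nat in auto)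
  hence "exp (ln (a n) / real n) \<le> exp (ln (b k) / real k + C / real n)" by simp
  thus "a n powr (1 / real n) \<le> b k powr (1 / real k) * exp (C / real n)"
    using a[of n] b by (simp add: powr_exp_ln exp_add)
qed

lemma self_bound:
  assumes R: "S \<le> R" and k: "1 \<le> k"
  shows "\<exists>M. \<forall>n\<ge>1. NN R n powr (1 / real n) \<le> NN R k powr (1 / real k) * exp (M / real n)"
proof -
  have "\<forall>n\<ge>max 1 1. NN R n powr (1 / real n) \<le> NN R k powr (1 / real k) * exp (real k * ln (real l) / real n)"
  proof (rule c_bound[where Nz=1])
    show "\<And>n. 0 < NN R n" using NN_pos R S_nonneg by auto
    show "1 \<le> NN R k" using Ncount_ge1 R S_nonneg by auto
    show "1 \<le> k" by fact
    fix n :: nat assume "1 \<le> n"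
    show "ln (NN R n) \<le> real (n div k) * ln (NN R k) + real k * ln (real l)"
      by (rule ln_bound[where a="NN R"]) (use subm R Ncount_ge1 S_nonneg Ncount_le k \<open>1 \<le> n\<close> in auto)
  qed
  thus ?thesis by auto
qed

lemma cross_bound:
  assumes R: "S \<le> R" and R2: "S < R2" and k: "1 \<le> k"
  shows "\<exists>M Nz. \<forall>n\<ge>Nz. NN R n powr (1 / real n) \<le> NN R2 k powr (1 / real k) * exp (M / real n)"
proof -
  obtain m0 where "(R - S) / (R2 - S) < lam ^ m0" using real_arch_pow[OF lam_gt] by blast
  define m where "m = Suc m0"
  have "lam ^ m0 \<le> lam ^ m" unfolding m_def using lam_gt by (intro power_increasing) auto
  hence "(R - S) / (R2 - S) < lam ^ m" using \<open>(R - S) / (R2 - S) < lam ^ m0\<close> by linarith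
  hence "(R - S) < (R2 - S) * lam ^ m" using R2 by (simp add: divide_less_eq mult.commute)
  hence "(R - S) / lam ^ m < R2 - S" using lam_gt by (simp add: divide_less_eq mult.commute)
  hence Rle: "S + (R - S) / lam ^ m \<le> R2" by simp
  have m1: "1 \<le> m" by (simp add: m_def)
  define C where "C = real k * ln (real l) + ln (NN R m)"
  have "\<forall>n\<ge>max (m + 1) 1. NN R n powr (1 / real n) \<le> NN R2 k powr (1 / real k) * exp (C / real n)"
  proof (rule c_bound[where Nz="m+1"])
    show "\<And>n. 0 < NN R n" using NN_pos R S_nonneg by auto
    show "1 \<le> NN R2 k" using Ncount_ge1 R2 S_nonneg by auto
    show "1 \<le> k" by fact
    fix n :: nat assume n: "m + 1 \<le> n"
    define j where "j = n - m"
    have j: "1 \<le> j" "n = j + m" using n by (auto simp: j_def)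
    have "NN R n \<le> NN (S + (R - S) / lam ^ m) j * NN R m" using key_N[OF R, of j m] j by simp
    also have "\<dots> \<le> NN R2 j * NN R m"
      using Ncount_mono[OF Rle] NN_pos[of R m] R S_nonneg by (intro mult_right_mono) auto
    finally have "ln (NN R n) \<le> ln (NN R2 j * NN R m)"
      using NN_pos[of R n] R S_nonneg by simp
    also have "\<dots> = ln (NN R2 j) + ln (NN R m)"
      using NN_pos[of R2 j] NN_pos[of R m] R R2 S_nonneg by (simp add: ln_mult)
    also have "ln (NN R2 j) \<le> real (j div k) * ln (NN R2 k) + real k * ln (real l)"
      by (rule ln_bound[where a="NN R2"]) (use subm R2 Ncount_ge1 S_nonneg Ncount_le k j in auto)
    also have "real (j div k) * ln (NN R2 k) \<le> real (n div k) * ln (NN R2 k)"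
      using Ncount_ge1[of R2 k] R2 S_nonneg j by (intro mult_right_mono) (auto intro: div_le_mono)
    finally show "ln (NN R n) \<le> real (n div k) * ln (NN R2 k) + C"
      by (simp add: C_def algebra_simps)
  qed
  thus ?thesis by blast
qed

end


lemma Cr_der: assumes "C_r r g" "1 \<le> r" shows "(g has_real_derivative deriv g x) (at x)"
proof -
  from assms(1) have h: "\<forall>k<r. \<forall>x. ((deriv ^^ k) g has_real_derivative (deriv ^^ Suc k) g x) (at x)"
    unfolding C_r_def by blast
  have "0 < r" using assms(2) by simp
  hence "((deriv ^^ 0) g has_real_derivative (deriv ^^ Suc 0) g x) (at x)" using h by blast
  thus ?thesis by simp
qed

lemma Cr_der2: assumes "C_r r g" "2 \<le> r" shows "isCont (deriv g) x"
proof -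
  from assms(1) have h: "\<forall>k<r. \<forall>x. ((deriv ^^ k) g has_real_derivative (deriv ^^ Suc k) g x) (at x)"
    unfolding C_r_def by blast
  have "1 < r" using assms(2) by simp
  hence "((deriv ^^ 1) g has_real_derivative (deriv ^^ Suc 1) g x) (at x)" using h by blast
  hence "(deriv g has_real_derivative (deriv ^^ Suc 1) g x) (at x)" by simp
  thus ?thesis by (rule DERIV_isCont)
qed

lemma per_deriv:
  assumes d: "\<And>x. (g has_real_derivative deriv g x) (at x)" and p: "\<And>x. g (x + 1) = g x"
  shows "deriv g (x + 1) = deriv g x"
proof -
  have "((\<lambda>y. g (y + 1)) has_real_derivative deriv g (x + 1)) (at x)"
    using d[of "x+1"] by (simp add: DERIV_shift)
  moreover have "(\<lambda>y. g (y + 1)) = g" using p by auto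
  ultimately have "(g has_real_derivative deriv g (x + 1)) (at x)" by simp
  thus ?thesis using d[of x] by (rule DERIV_unique)
qed

lemma per_int:
  fixes h :: "real \<Rightarrow> real"
  assumes p: "\<And>x. h (x + 1) = h x"
  shows "h (x + real n) = h x" "h (x - real n) = h x"
proof -
  show "h (x + real n) = h x"
  proof (induction n)
    case (Suc n)
    have "h (x + real (Suc n)) = h ((x + real n) + 1)" by (simp add: algebra_simps)
    also have "\<dots> = h (x + real n)" by (rule p)
    also have "\<dots> = h x" by (rule Suc.IH)
    finally show ?case .
  qed simp
  show "h (x - real n) = h x"
  proof (induction n)
    case (Suc n)
    have "h (x - real (Suc n)) = h ((x - real (Suc n)) + 1)" by (rule p[symmetric])
    also have "\<dots> = h (x - real n)" by (simp add: algebra_simps)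
    also have "\<dots> = h x" by (rule Suc.IH)
    finally show ?case .
  qed simp
qed

lemma per_frac:
  fixes h :: "real \<Rightarrow> real"
  assumes p: "\<And>x. h (x + 1) = h x"
  shows "h x = h (frac x)"
proof (cases "0 \<le> \<lfloor>x\<rfloor>")
  case True
  have "x = frac x + real (nat \<lfloor>x\<rfloor>)" using True by (simp add: frac_def)
  hence "h x = h (frac x + real (nat \<lfloor>x\<rfloor>))" by simp
  thus ?thesis using per_int(1)[of h, OF p] by simp
next
  case False
  have "x = frac x - real (nat (- \<lfloor>x\<rfloor>))" using False by (simp add: frac_def)
  hence "h x = h (frac x - real (nat (- \<lfloor>x\<rfloor>)))" by simp
  thus ?thesis using per_int(2)[of h, OF p] by simp
qed

lemma bdd_deriv:
  assumes "C_r r g" "2 \<le> r" "periodic1 g"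
  shows "bdd_above (range (\<lambda>x. \<bar>deriv g x\<bar>))"
proof -
  have d: "\<And>x. (g has_real_derivative deriv g x) (at x)" using Cr_der assms by auto
  have p: "\<And>x. g (x + 1) = g x" using assms by (simp add: periodic1_def)
  have pd: "\<And>x. \<bar>deriv g (x + 1)\<bar> = \<bar>deriv g x\<bar>" using per_deriv[OF d p] by simp
  have cont: "continuous_on {0..1} (\<lambda>x. \<bar>deriv g x\<bar>)"
    using Cr_der2[OF assms(1,2)] by (intro continuous_at_imp_continuous_on continuous_intros) auto
  have "compact ((\<lambda>x. \<bar>deriv g x\<bar>) ` {0..1})" by (rule compact_continuous_image[OF cont]) simp
  hence bd: "bdd_above ((\<lambda>x. \<bar>deriv g x\<bar>) ` {0..1})" by (intro bounded_imp_bdd_above compact_imp_bounded)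
  then obtain B where B0: "\<forall>y\<in>{0..1}. \<bar>deriv g y\<bar> \<le> B" by (auto simp: bdd_above_def)
  hence B: "\<And>y. y \<in> {0..1} \<Longrightarrow> \<bar>deriv g y\<bar> \<le> B" by blast
  show ?thesis
  proof (rule bdd_aboveI2[where M=B])
    fix x
    have "\<bar>deriv g x\<bar> = \<bar>deriv g (frac x)\<bar>" by (rule per_frac[of "\<lambda>x. \<bar>deriv g x\<bar>"]) (rule pd)
    also have "\<dots> \<le> B" by (rule B) (simp add: frac_lt_1 less_imp_le)
    finally show "\<bar>deriv g x\<bar> \<le> B" .
  qed
qed

theorem mainTheorem2:
  fixes r l :: nat and E \<tau> :: "real \<Rightarrow> real" and lam Lam R :: real
  assumes "r \<ge> 2" and "l \<ge> 2"
    and "expanding_lift r E l lam Lam"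
    and "C_r r \<tau>" and "periodic1 \<tau>"
    and "R > sup_norm_deriv \<tau>"
  shows "(\<forall>n m. n \<ge> 1 \<longrightarrow> m \<ge> 1 \<longrightarrow>
           (let R' = sup_norm_deriv \<tau> + lam powi (- int m) * (R - sup_norm_deriv \<tau>) in
              Ncount E \<tau> lam R (n + m) \<le> Ncount E \<tau> lam R' n * Ncount E \<tau> lam R m
            \<and> Ncount E \<tau> lam R' n * Ncount E \<tau> lam R m \<le> Ncount E \<tau> lam R n * Ncount E \<tau> lam R m))
       \<and> (\<exists>L. (\<lambda>n. Ncount E \<tau> lam R (Suc n) powr (1 / real (Suc n))) \<longlonglongrightarrow> L
              \<and> L = (INF n\<in>{1..}. Ncount E \<tau> lam R n powr (1 / real n))
              \<and> (\<forall>R2 > sup_norm_deriv \<tau>.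
                   (\<lambda>n. Ncount E \<tau> lam R2 (Suc n) powr (1 / real (Suc n))) \<longlonglongrightarrow> L))"
proof -
  define S where "S = sup_norm_deriv \<tau>"
  have bdd: "bdd_above (range (\<lambda>x. \<bar>deriv \<tau> x\<bar>))" by (rule bdd_deriv) (use assms in auto)
  have tl: "\<And>x. \<bar>deriv \<tau> x\<bar> \<le> S" unfolding S_def sup_norm_deriv_def
    by (rule cSUP_upper[OF _ bdd]) simp
  have EL: "C_r r E" "\<And>x. E (x + 1) = E x + real l" "1 < lam" "\<And>x. lam \<le> deriv E x"
    using assms(3) unfolding expanding_lift_def by auto
  interpret setting E \<tau> l lam S
  proof
    show "\<And>x. (E has_real_derivative deriv E x) (at x)" using Cr_der[OF EL(1)] assms(1) by auto
  qed (use EL assms(2) tl in auto)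
  have R: "S \<le> R" using assms(6) S_def by simp
  have part1: "\<forall>n m. n \<ge> 1 \<longrightarrow> m \<ge> 1 \<longrightarrow>
           (let R' = S + lam powi (- int m) * (R - S) in
              NN R (n + m) \<le> NN R' n * NN R m \<and> NN R' n * NN R m \<le> NN R n * NN R m)"
  proof (intro allI impI)
    fix n m :: nat
    have eq: "S + lam powi (- int m) * (R - S) = S + (R - S) / lam ^ m"
      by (simp add: power_int_minus divide_inverse mult.commute)
    have "S + (R - S) / lam ^ m \<le> R"
    proof -
      have "1 \<le> lam ^ m" using lam_gt by simp
      hence "(R - S) / lam ^ m \<le> R - S" using R by (simp add: divide_le_eq mult_le_cancel_left1)
      thus ?thesis by simp
    qed
    hence "NN (S + (R - S) / lam ^ m) n \<le> NN R n" by (rule Ncount_mono)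
    hence "NN (S + (R - S) / lam ^ m) n * NN R m \<le> NN R n * NN R m"
      using NN_pos[of R m] R S_nonneg by (intro mult_right_mono) auto
    thus "let R' = S + lam powi (- int m) * (R - S) in
              NN R (n + m) \<le> NN R' n * NN R m \<and> NN R' n * NN R m \<le> NN R n * NN R m"
      unfolding eq Let_def using key_N[OF R, of n m] by simp
  qed
  have lim: "(\<lambda>n. NN \<rho> (Suc n) powr (1 / real (Suc n))) \<longlonglongrightarrow> (INF n\<in>{1..}. NN \<rho> n powr (1 / real n))"
    if "S \<le> \<rho>" for \<rho>
    by (rule lim_of_bound[where c="\<lambda>n. NN \<rho> n powr (1 / real n)"]) (use self_bound that in auto)
  have infle: "(INF n\<in>{1..}. NN \<rho> n powr (1 / real n)) \<le> (INF n\<in>{1..}. NN \<rho>2 n powr (1 / real n))"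
    if r1: "S \<le> \<rho>" and r2: "S < \<rho>2" for \<rho> \<rho>2
  proof (rule cINF_greatest)
    show "{1::nat..} \<noteq> {}" by auto
    fix k :: nat assume "k \<in> {1..}"
    hence k: "1 \<le> k" by simp
    obtain M Nz where MN: "\<And>n. Nz \<le> n \<Longrightarrow> NN \<rho> n powr (1 / real n) \<le> NN \<rho>2 k powr (1 / real k) * exp (M / real n)"
      using cross_bound[OF r1 r2 k] by blast
    have bdd: "bdd_below ((\<lambda>n. NN \<rho> n powr (1 / real n)) ` {1..})" by (rule bdd_belowI2[where m=0]) simp
    show "(INF n\<in>{1..}. NN \<rho> n powr (1 / real n)) \<le> NN \<rho>2 k powr (1 / real k)"
      by (rule inf_le_of_bound[OF _ MN]) (rule cINF_lower[OF bdd], simp)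
  qed
  define L where "L = (INF n\<in>{1..}. NN R n powr (1 / real n))"
  have part2: "\<forall>R2 > S. (\<lambda>n. NN R2 (Suc n) powr (1 / real (Suc n))) \<longlonglongrightarrow> L"
  proof (intro allI impI)
    fix R2 assume R2: "S < R2"
    have "(INF n\<in>{1..}. NN R2 n powr (1 / real n)) = L"
      unfolding L_def using infle[OF R R2] infle[of R2 R] R2 assms(6) S_def by (intro antisym) auto
    thus "(\<lambda>n. NN R2 (Suc n) powr (1 / real (Suc n))) \<longlonglongrightarrow> L" using lim[of R2] R2 by simp
  qed
  show ?thesis using part1 part2 lim[OF R] unfolding S_def L_def by blast
qed


end
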